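(* For integers $s,t\ge 5$ with $\max\{s,t\}\ge 6$, ${\rm dim}_s(\overline{C}_s\diamond\overline{C}_t)=st-\lfloor s/2\rfloor\lfloor t/2\rfloor$. Moreover, ${\rm dim}_s(\overline{C}_5\diamond\overline{C}_5)=20$.
   Context: The modular product $G\diamond H$ has vertex set $V(G)\times V(H)$; distinct vertices $(g,h)$ and $(g',h')$ are adjacent iff ($g=g'$ and $hh'\in E(H)$), or ($gg'\in E(G)$ and $h=h'$), or ($gg'\in E(G)$ and $hh'\in E(H)$), or ($g\neq g'$, $h\neq h'$, $gg'\notin E(G)$ and $hh'\notin E(H)$). $C_n$ is the cycle on $n$ vertices and $\overline{C}_n$ its complement. For a connected graph $X$, a vertex $z$ strongly resolves distinct vertices $x,y$ if $d_X(y,z)=d_X(y,x)+d_X(x,z)$ or $d_X(x,z)=d_X(x,y)+d_X(y,z)$; ${\rm dim}_s(X)$ is the minimum cardinality of a set $S\subseteq V(X)$ such that every pair of distinct vertices is strongly resolved by some vertex of $S$. *)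

theory Defs
  imports Main
begin

type_synonym 'a graph = "'a set \<times> ('a \<Rightarrow> 'a \<Rightarrow> bool)"

definition verts :: "'a graph \<Rightarrow> 'a set" where "verts G = fst G"
definition adj :: "'a graph \<Rightarrow> 'a \<Rightarrow> 'a \<Rightarrow> bool" where "adj G = snd G"

definition cycle_graph :: "nat \<Rightarrow> nat graph" where
  "cycle_graph n = ({..<n}, \<lambda>i j. i < n \<and> j < n \<and> i \<noteq> j \<and>
      (j = (i + 1) mod n \<or> i = (j + 1) mod n))"

definition complement :: "'a graph \<Rightarrow> 'a graph" where
  "complement G = (verts G, \<lambda>x y. x \<in> verts G \<and> y \<in> verts G \<and> x \<noteq> y \<and> \<not> adj G x y)"

definition modular_product :: "'a graph \<Rightarrow> 'b graph \<Rightarrow> ('a \<times> 'b) graph" where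
  "modular_product G H = (verts G \<times> verts H, \<lambda>(g,h) (g',h').
      (g,h) \<in> verts G \<times> verts H \<and> (g',h') \<in> verts G \<times> verts H \<and> (g,h) \<noteq> (g',h') \<and>
      ((g = g' \<and> adj H h h') \<or> (adj G g g' \<and> h = h') \<or> (adj G g g' \<and> adj H h h') \<or>
       (g \<noteq> g' \<and> h \<noteq> h' \<and> \<not> adj G g g' \<and> \<not> adj H h h')))"

definition edge_rel :: "'a graph \<Rightarrow> ('a \<times> 'a) set" where
  "edge_rel G = {(x, y). x \<in> verts G \<and> y \<in> verts G \<and> adj G x y}"

text \<open>Graph distance: length of a shortest walk (meaningful for connected graphs).\<close>
definition gdist :: "'a graph \<Rightarrow> 'a \<Rightarrow> 'a \<Rightarrow> nat" where
  "gdist G x y = (LEAST n. (x, y) \<in> edge_rel G ^^ n)"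

definition strongly_resolves :: "'a graph \<Rightarrow> 'a \<Rightarrow> 'a \<Rightarrow> 'a \<Rightarrow> bool" where
  "strongly_resolves G z x y \<longleftrightarrow>
     gdist G y z = gdist G y x + gdist G x z \<or> gdist G x z = gdist G x y + gdist G y z"

definition strong_resolving_set :: "'a graph \<Rightarrow> 'a set \<Rightarrow> bool" where
  "strong_resolving_set G S \<longleftrightarrow> S \<subseteq> verts G \<and>
     (\<forall>x\<in>verts G. \<forall>y\<in>verts G. x \<noteq> y \<longrightarrow> (\<exists>z\<in>S. strongly_resolves G z x y))"

definition strong_metric_dim :: "'a graph \<Rightarrow> nat" where
  "strong_metric_dim G = (LEAST k. \<exists>S. strong_resolving_set G S \<and> finite S \<and> card S = k)"

end

theory Submission
  imports Defs
begin

definition cyc :: "nat \<Rightarrow> nat \<Rightarrow> nat \<Rightarrow> bool" where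
  "cyc n a b \<longleftrightarrow> a < n \<and> b < n \<and> a \<noteq> b \<and> (b = (a+1) mod n \<or> a = (b+1) mod n)"

lemma adj_cycle: "adj (cycle_graph n) = cyc n"
  by (auto simp: adj_def cycle_graph_def cyc_def fun_eq_iff)

lemma verts_cycle: "verts (cycle_graph n) = {..<n}"
  by (simp add: verts_def cycle_graph_def)

lemma mod_suc_lt: "a < n \<Longrightarrow> (a+1) mod (n::nat) = (if a + 1 < n then a + 1 else 0)"
proof (cases "a + 1 < n")
  case False
  assume "a < n"
  then have "a + 1 = n" using False by simp
  then show ?thesis by simp
qed simp

lemma mod_Suc_lt: "a < n \<Longrightarrow> (Suc a) mod (n::nat) = (if Suc a < n then Suc a else 0)"
  using mod_suc_lt[of a n] by simp

lemma cyc_iff: "n \<ge> 3 \<Longrightarrow> cyc n a b \<longleftrightarrow> a<n \<and> b<n \<and> (b=a+1 \<or> a=b+1 \<or> (a=0\<and>b=n-1) \<or> (b=0\<and>a=n-1))"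
  unfolding cyc_def using mod_suc_lt[of a n] mod_suc_lt[of b n]
  by (cases "a<n"; cases "b<n") (auto split: if_splits)

lemma cyc_sym: "cyc n a b = cyc n b a" by (auto simp: cyc_def)
lemma cyc_irrefl: "\<not> cyc n a a" by (auto simp: cyc_def)

abbreviation XX :: "nat \<Rightarrow> nat \<Rightarrow> (nat\<times>nat) graph" where
  "XX s t \<equiv> modular_product (complement (cycle_graph s)) (complement (cycle_graph t))"

lemma verts_X: "verts (XX s t) = {..<s} \<times> {..<t}"
  by (simp add: modular_product_def verts_def complement_def verts_cycle[unfolded verts_def])

lemma adj_X: "adj (XX s t) (g,h) (g',h') \<longleftrightarrow> g<s \<and> h<t \<and> g'<s \<and> h'<t \<and> (g,h)\<noteq>(g',h') \<and> (cyc s g g' \<longleftrightarrow> cyc t h h')"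
  unfolding modular_product_def complement_def
  by (auto simp: adj_def verts_def verts_cycle[unfolded verts_def] adj_cycle[unfolded adj_def] cyc_irrefl)


lemma adj_X_sym: "adj (XX s t) x y = adj (XX s t) y x"
  by (cases x; cases y) (auto simp: adj_X cyc_sym)

lemma adj_X_V: "adj (XX s t) x y \<Longrightarrow> x \<in> {..<s}\<times>{..<t} \<and> y \<in> {..<s}\<times>{..<t} \<and> x \<noteq> y"
  by (cases x; cases y) (auto simp: adj_X)

lemma far_vertex:
  assumes "s \<ge> 5" "cyc s g g'"
  shows "\<exists>a<s. a\<noteq>g \<and> a\<noteq>g' \<and> \<not>cyc s g a \<and> \<not>cyc s g' a"
proof -
  have s3: "s \<ge> 3" using assms by simp
  have gg: "g < s" "g' < s" "g' = g+1 \<or> g = g'+1 \<or> (g=0 \<and> g'=s-1) \<or> (g'=0 \<and> g=s-1)"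
    using assms(2) cyc_iff[OF s3] by auto
  from gg(3) show ?thesis
  proof (elim disjE)
    assume h: "g' = g+1"
    show ?thesis
      by (rule exI[of _ "if g+3<s then g+3 else g+3-s"]) (use h gg assms in \<open>auto simp: cyc_iff[OF s3]\<close>)
  next
    assume h: "g = g'+1"
    show ?thesis
      by (rule exI[of _ "if g'+3<s then g'+3 else g'+3-s"]) (use h gg assms in \<open>auto simp: cyc_iff[OF s3]\<close>)
  next
    assume h: "g=0 \<and> g'=s-1"
    show ?thesis
      by (rule exI[of _ "2"]) (use h gg assms in \<open>auto simp: cyc_iff[OF s3]\<close>)
  next
    assume h: "g'=0 \<and> g=s-1"
    show ?thesis
      by (rule exI[of _ "2"]) (use h gg assms in \<open>auto simp: cyc_iff[OF s3]\<close>)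
  qed
qed

lemma common_nb:
  assumes st: "s \<ge> 5" "t \<ge> 5" and V: "x \<in> {..<s}\<times>{..<t}" "y \<in> {..<s}\<times>{..<t}"
    and ne: "x \<noteq> y" "\<not> adj (XX s t) x y"
  shows "\<exists>z. adj (XX s t) x z \<and> adj (XX s t) z y"
proof -
  obtain g h g' h' where xy: "x = (g,h)" "y = (g',h')" by (cases x; cases y) auto
  have lt: "g<s" "h<t" "g'<s" "h'<t" using V xy by auto
  have diff: "cyc s g g' \<noteq> cyc t h h'" using ne lt xy by (auto simp: adj_X)
  show ?thesis
  proof (cases "cyc s g g'")
    case True
    then have nh: "\<not> cyc t h h'" using diff by simp
    obtain a where a: "a<s" "a\<noteq>g" "a\<noteq>g'" "\<not>cyc s g a" "\<not>cyc s g' a" using far_vertex[OF st(1) True] by blast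
    show ?thesis
      by (rule exI[of _ "(a,h)"]) (use a lt nh in \<open>auto simp: xy adj_X cyc_irrefl cyc_sym\<close>)
  next
    case False
    then have nh: "cyc t h h'" using diff by simp
    obtain b where b: "b<t" "b\<noteq>h" "b\<noteq>h'" "\<not>cyc t h b" "\<not>cyc t h' b" using far_vertex[OF st(2) nh] by blast
    show ?thesis
      by (rule exI[of _ "(g,b)"]) (use b lt False in \<open>auto simp: xy adj_X cyc_irrefl cyc_sym\<close>)
  qed
qed

lemma edge_rel_X: "(x,y) \<in> edge_rel (XX s t) \<longleftrightarrow> adj (XX s t) x y"
  using adj_X_V[of s t x y] by (auto simp: edge_rel_def verts_X)

lemma gdist_self: "gdist G x x = 0"
  unfolding gdist_def by (rule Least_eq_0) simp

lemma gdist_X: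
  assumes st: "s \<ge> 5" "t \<ge> 5" and V: "x \<in> {..<s}\<times>{..<t}" "y \<in> {..<s}\<times>{..<t}"
  shows "gdist (XX s t) x y = (if x = y then 0 else if adj (XX s t) x y then 1 else 2)"
proof -
  let ?E = "edge_rel (XX s t)"
  have p0: "(x,y) \<in> ?E ^^ 0 \<longleftrightarrow> x = y" by simp
  have p1: "(x,y) \<in> ?E ^^ 1 \<longleftrightarrow> adj (XX s t) x y" by (simp add: edge_rel_X)
  show ?thesis
  proof (cases "x = y")
    case True thus ?thesis by (simp add: gdist_self)
  next
    case ne: False
    show ?thesis
    proof (cases "adj (XX s t) x y")
      case True
      have "gdist (XX s t) x y = 1"
        unfolding gdist_def
      proof (rule Least_equality)
        show "(x,y) \<in> ?E ^^ 1" using p1 True by simp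
        fix n assume "(x,y) \<in> ?E ^^ n"
        then show "1 \<le> n" using ne p0 by (cases n) auto
      qed
      then show ?thesis using ne True by simp
    next
      case False
      obtain z where z: "adj (XX s t) x z" "adj (XX s t) z y" using common_nb[OF st V ne False] by blast
      have p2: "(x,y) \<in> ?E ^^ 2"
      proof -
        have "(x,z) \<in> ?E ^^ 1" using z p1 by (simp add: edge_rel_X)
        moreover have "(z,y) \<in> ?E" using z(2) by (simp add: edge_rel_X)
        ultimately have "(x,y) \<in> ?E ^^ Suc 1" by (rule relpow_Suc_I)
        then show ?thesis by (simp add: numeral_2_eq_2)
      qed
      have "gdist (XX s t) x y = 2"
        unfolding gdist_def
      proof (rule Least_equality)
        show "(x,y) \<in> ?E ^^ 2" by (rule p2)
        fix n assume n: "(x,y) \<in> ?E ^^ n"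
        show "2 \<le> n"
        proof (rule ccontr)
          assume "\<not> 2 \<le> n"
          then have "n = 0 \<or> n = 1" by auto
          then show False using n ne False p0 p1 by auto
        qed
      qed
      then show ?thesis using ne False by simp
    qed
  qed
qed

lemma res_nonadj:
  assumes st: "s \<ge> 5" "t \<ge> 5" and V: "x \<in> {..<s}\<times>{..<t}" "y \<in> {..<s}\<times>{..<t}" "z \<in> {..<s}\<times>{..<t}"
    and ne: "x \<noteq> y" "\<not> adj (XX s t) x y"
    and r: "strongly_resolves (XX s t) z x y"
  shows "z = x \<or> z = y"
proof -
  have "\<not> adj (XX s t) y x" using ne adj_X_sym by metis
  then show ?thesis
    using r gdist_X[OF st V(1) V(2)] gdist_X[OF st V(2) V(1)] gdist_X[OF st V(1) V(3)] gdist_X[OF st V(2) V(3)] ne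
    unfolding strongly_resolves_def by (auto split: if_splits)
qed

lemma res_adj:
  assumes st: "s \<ge> 5" "t \<ge> 5" and V: "x \<in> {..<s}\<times>{..<t}" "y \<in> {..<s}\<times>{..<t}" "z \<in> {..<s}\<times>{..<t}"
    and a: "adj (XX s t) x y" "adj (XX s t) x z" "\<not> adj (XX s t) y z" "z \<noteq> y"
  shows "strongly_resolves (XX s t) z x y"
proof -
  have "adj (XX s t) y x" "x \<noteq> y" "x \<noteq> z" using a adj_X_sym adj_X_V by metis+
  then show ?thesis
    using gdist_X[OF st V(2) V(1)] gdist_X[OF st V(1) V(3)] gdist_X[OF st V(2) V(3)] a
    unfolding strongly_resolves_def by auto
qed

lemma res_self1: "strongly_resolves G x x y"
  unfolding strongly_resolves_def by (simp add: gdist_self)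
lemma res_self2: "strongly_resolves G y x y"
  unfolding strongly_resolves_def by (simp add: gdist_self)


definition clq :: "nat \<Rightarrow> nat \<Rightarrow> (nat\<times>nat) set \<Rightarrow> bool" where
  "clq s t K \<longleftrightarrow> K \<subseteq> {..<s}\<times>{..<t} \<and>
     (\<forall>p\<in>K. \<forall>q\<in>K. p \<noteq> q \<longrightarrow> (cyc s (fst p) (fst q) \<longleftrightarrow> cyc t (snd p) (snd q)))"

lemma clq_adj: "clq s t K \<Longrightarrow> x \<in> K \<Longrightarrow> y \<in> K \<Longrightarrow> x \<noteq> y \<Longrightarrow> adj (XX s t) x y"
proof -
  assume a: "clq s t K" "x \<in> K" "y \<in> K" "x \<noteq> y"
  then have "cyc s (fst x) (fst y) = cyc t (snd x) (snd y)" "x \<in> {..<s}\<times>{..<t}" "y \<in> {..<s}\<times>{..<t}"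
    unfolding clq_def by blast+
  then show ?thesis using a(4) by (cases x; cases y) (simp add: adj_X)
qed

lemma lower_clq:
  assumes st: "s \<ge> 5" "t \<ge> 5" and S: "strong_resolving_set (XX s t) S"
  shows "clq s t ({..<s}\<times>{..<t} - S)"
  unfolding clq_def
proof (intro conjI ballI impI)
  fix p q assume p: "p \<in> {..<s}\<times>{..<t} - S" and q: "q \<in> {..<s}\<times>{..<t} - S" and ne: "p \<noteq> q"
  show "cyc s (fst p) (fst q) \<longleftrightarrow> cyc t (snd p) (snd q)"
  proof (rule ccontr)
    assume c: "\<not> ?thesis"
    have na: "\<not> adj (XX s t) p q" using c by (cases p; cases q) (auto simp: adj_X)
    obtain z where z: "z \<in> S" "strongly_resolves (XX s t) z p q"
      using S p q ne unfolding strong_resolving_set_def verts_X by blast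
    have "z \<in> {..<s}\<times>{..<t}" using S z unfolding strong_resolving_set_def verts_X by blast
    then have "z = p \<or> z = q" using res_nonadj[OF st _ _ _ ne na z(2)] p q by blast
    then show False using z p q by blast
  qed
qed auto

lemma upper_res:
  assumes st: "s \<ge> 5" "t \<ge> 5" and W: "clq s t W"
    and tw: "\<forall>x\<in>W. \<forall>y\<in>W. x \<noteq> y \<longrightarrow> (\<exists>z\<in>{..<s}\<times>{..<t}.
       (adj (XX s t) x z \<and> \<not> adj (XX s t) y z \<and> z \<noteq> y) \<or> (adj (XX s t) y z \<and> \<not> adj (XX s t) x z \<and> z \<noteq> x))"
  shows "strong_resolving_set (XX s t) ({..<s}\<times>{..<t} - W)"
  unfolding strong_resolving_set_def verts_X
proof (intro conjI ballI impI)
  fix x y assume x: "x \<in> {..<s}\<times>{..<t}" and y: "y \<in> {..<s}\<times>{..<t}" and ne: "x \<noteq> y"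
  show "\<exists>z\<in>{..<s}\<times>{..<t} - W. strongly_resolves (XX s t) z x y"
  proof (cases "x \<in> W \<and> y \<in> W")
    case False
    then have "x \<notin> W \<or> y \<notin> W" by blast
    then show ?thesis
    proof
      assume "x \<notin> W" then show ?thesis using x res_self1[of "XX s t" x y] by blast
    next
      assume "y \<notin> W" then show ?thesis using y res_self2[of "XX s t" y x] by blast
    qed
  next
    case True
    have axy: "adj (XX s t) x y" using clq_adj[OF W] True ne by blast
    have ex: "\<exists>z\<in>{..<s}\<times>{..<t}. (adj (XX s t) x z \<and> \<not> adj (XX s t) y z \<and> z \<noteq> y) \<or> (adj (XX s t) y z \<and> \<not> adj (XX s t) x z \<and> z \<noteq> x)"
      using tw[rule_format, of x y] True ne by blast
    obtain z where z: "z \<in> {..<s}\<times>{..<t}"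
      "(adj (XX s t) x z \<and> \<not> adj (XX s t) y z \<and> z \<noteq> y) \<or> (adj (XX s t) y z \<and> \<not> adj (XX s t) x z \<and> z \<noteq> x)"
      using ex by blast
    have zW: "z \<notin> W"
    proof
      assume zw: "z \<in> W"
      have "z \<noteq> x" "z \<noteq> y" using z(2) adj_X_V[of s t x z] adj_X_V[of s t y z] by auto
      moreover have "adj (XX s t) x z" "adj (XX s t) y z" using clq_adj[OF W] zw True calculation by blast+
      ultimately show False using z(2) by blast
    qed
    from z(2) show ?thesis
    proof
      assume h: "adj (XX s t) x z \<and> \<not> adj (XX s t) y z \<and> z \<noteq> y"
      show ?thesis using res_adj[OF st x y z(1) axy] h z zW by blast
    next
      assume h: "adj (XX s t) y z \<and> \<not> adj (XX s t) x z \<and> z \<noteq> x"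
      have "adj (XX s t) y x" using axy adj_X_sym by metis
      then have "strongly_resolves (XX s t) z y x" using res_adj[OF st y x z(1)] h by blast
      then have "strongly_resolves (XX s t) z x y" unfolding strongly_resolves_def by auto
      then show ?thesis using z zW by blast
    qed
  qed
qed auto

lemma dim_X:
  assumes st: "s \<ge> 5" "t \<ge> 5" and W: "clq s t W"
    and tw: "\<forall>x\<in>W. \<forall>y\<in>W. x \<noteq> y \<longrightarrow> (\<exists>z\<in>{..<s}\<times>{..<t}.
       (adj (XX s t) x z \<and> \<not> adj (XX s t) y z \<and> z \<noteq> y) \<or> (adj (XX s t) y z \<and> \<not> adj (XX s t) x z \<and> z \<noteq> x))"
    and bound: "\<And>K. clq s t K \<Longrightarrow> card K \<le> card W"
  shows "strong_metric_dim (XX s t) = s * t - card W"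
  unfolding strong_metric_dim_def
proof (rule Least_equality)
  have WV: "W \<subseteq> {..<s}\<times>{..<t}" using W clq_def by blast
  have "card ({..<s}\<times>{..<t} - W) = s * t - card W"
    using WV by (simp add: card_Diff_subset finite_subset card_cartesian_product)
  then show "\<exists>S. strong_resolving_set (XX s t) S \<and> finite S \<and> card S = s * t - card W"
    using upper_res[OF st W tw] by blast
next
  fix k assume "\<exists>S. strong_resolving_set (XX s t) S \<and> finite S \<and> card S = k"
  then obtain S where S: "strong_resolving_set (XX s t) S" "card S = k" by blast
  have SV: "S \<subseteq> {..<s}\<times>{..<t}" using S unfolding strong_resolving_set_def verts_X by blast
  have "card ({..<s}\<times>{..<t} - S) \<le> card W" using bound lower_clq[OF st S(1)] by blast
  moreover have "card ({..<s}\<times>{..<t} - S) = s * t - card S"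
    using SV by (simp add: card_Diff_subset finite_subset card_cartesian_product)
  moreover have "card S \<le> s * t" using SV card_mono[OF _ SV] by (simp add: card_cartesian_product)
  ultimately show "s * t - card W \<le> k" using S by linarith
qed

lemma four_cycle:
  assumes "t \<ge> 5" "cyc t h1 y1" "cyc t h2 y1" "cyc t h1 y2" "cyc t h2 y2" "h1 \<noteq> h2" "y1 \<noteq> y2"
  shows False
  using assms by (simp add: cyc_iff) arith

lemma three_nb:
  assumes "t \<ge> 5" "cyc t y a" "cyc t y b" "cyc t y c" "a \<noteq> b"
  shows "c = a \<or> c = b"
  using assms by (simp add: cyc_iff) arith

lemma other_nb:
  assumes "t \<ge> 5" "h \<noteq> h'" "h < t" "h' < t"
  shows "\<exists>b<t. cyc t h' b \<and> \<not> cyc t h b \<and> b \<noteq> h"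
proof -
  let ?b1 = "if h'+1<t then h'+1 else 0" and ?b2 = "if h'=0 then t-1 else h'-1"
  have "(cyc t h' ?b1 \<and> \<not> cyc t h ?b1 \<and> ?b1 \<noteq> h) \<or> (cyc t h' ?b2 \<and> \<not> cyc t h ?b2 \<and> ?b2 \<noteq> h)"
    using assms by (simp add: cyc_iff) arith
  moreover have "?b1 < t" "?b2 < t" using assms by auto
  ultimately show ?thesis by blast
qed

lemma mod_add_small: "a < n \<Longrightarrow> i \<le> n \<Longrightarrow> (a + i) mod (n::nat) = (if a + i < n then a + i else a + i - n)"
  by (simp add: mod_if)

lemma win_cols:
  assumes "s \<ge> 5" "g < s"
  defines "c \<equiv> \<lambda>i. (g + i) mod s"
  shows "cyc s (c 0) (c 1)" "cyc s (c 1) (c 2)" "cyc s (c 2) (c 3)"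
    "\<not> cyc s (c 0) (c 2)" "\<not> cyc s (c 0) (c 3)" "\<not> cyc s (c 1) (c 3)"
    "c 0 \<noteq> c 2" "c 0 \<noteq> c 3" "c 1 \<noteq> c 3" "c 0 \<noteq> c 1" "c 1 \<noteq> c 2" "c 2 \<noteq> c 3"
  using assms mod_add_small[of g s 1] mod_add_small[of g s 2] mod_add_small[of g s 3]
  by (simp_all add: cyc_iff) arith+


definition fib :: "(nat\<times>nat) set \<Rightarrow> nat \<Rightarrow> nat set" where
  "fib K g = {h. (g,h) \<in> K}"

lemma fib_sub: "clq s t K \<Longrightarrow> fib K g \<subseteq> {..<t}"
  unfolding clq_def fib_def by auto

lemma fin_fib: "clq s t K \<Longrightarrow> finite (fib K g)"
  by (rule finite_subset[OF fib_sub]) auto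

lemma card_K: "clq s t K \<Longrightarrow> card K = (\<Sum>g<s. card (fib K g))"
proof -
  assume c: "clq s t K"
  have "K = Sigma {..<s} (fib K)" using c unfolding clq_def fib_def by auto
  then show ?thesis using fin_fib[OF c] by (metis card_SigmaI finite_lessThan)
qed

lemma clq_pair: "clq s t K \<Longrightarrow> (g,h)\<in>K \<Longrightarrow> (g',h')\<in>K \<Longrightarrow> (g,h)\<noteq>(g',h') \<Longrightarrow> cyc s g g' = cyc t h h'"
  unfolding clq_def by fastforce

lemma suc_mod_ne: "n \<ge> 2 \<Longrightarrow> a < n \<Longrightarrow> (a::nat) \<noteq> (a+1) mod n"
  using mod_suc_lt[of a n] by auto

lemma cyc_suc: "n \<ge> 2 \<Longrightarrow> a < n \<Longrightarrow> cyc n a ((a+1) mod n)"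
  unfolding cyc_def using suc_mod_ne[of n a] by auto

lemma indep_card:
  assumes n: "n \<ge> 2" and I: "I \<subseteq> {..<n}" and ind: "\<forall>a\<in>I. \<forall>b\<in>I. \<not> cyc n a b"
  shows "card I \<le> n div 2"
proof -
  let ?f = "\<lambda>a. (a+1) mod n"
  have inj: "inj_on ?f I"
  proof
    fix a b assume ab: "a \<in> I" "b \<in> I" "?f a = ?f b"
    have "a < n" "b < n" using ab I by auto
    then show "a = b" using ab(3) mod_Suc_lt[of a n] mod_Suc_lt[of b n] by (simp split: if_splits)
  qed
  have disj: "I \<inter> ?f ` I = {}"
  proof (rule ccontr)
    assume "I \<inter> ?f ` I \<noteq> {}"
    then obtain a where a: "a \<in> I" "?f a \<in> I" by blast
    then have "cyc n a (?f a)" using cyc_suc[OF n] I by auto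
    then show False using ind a by blast
  qed
  have fin: "finite I" using I finite_subset by blast
  have "card (I \<union> ?f ` I) = card I + card (?f ` I)" using disj fin by (simp add: card_Un_disjoint)
  also have "card (?f ` I) = card I" using inj by (simp add: card_image)
  finally have e: "card (I \<union> ?f ` I) = 2 * card I" by simp
  have "I \<union> ?f ` I \<subseteq> {..<n}" using I n by auto
  then have "card (I \<union> ?f ` I) \<le> n" by (metis card_lessThan card_mono finite_lessThan)
  then show ?thesis using e by linarith
qed

lemma fib_card: "t \<ge> 2 \<Longrightarrow> clq s t K \<Longrightarrow> card (fib K g) \<le> t div 2"
proof -
  assume t: "t \<ge> 2" and c: "clq s t K"
  have "\<forall>a\<in>fib K g. \<forall>b\<in>fib K g. \<not> cyc t a b"
  proof (intro ballI)
    fix a b assume "a \<in> fib K g" "b \<in> fib K g"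
    then show "\<not> cyc t a b"
      using clq_pair[OF c, of g a g b] by (cases "a = b") (auto simp: fib_def cyc_def)
  qed
  then show ?thesis using indep_card[OF t fib_sub[OF c]] by blast
qed

lemma nb_card: "t \<ge> 3 \<Longrightarrow> card {h. cyc t x h} \<le> 2"
proof -
  assume t: "t \<ge> 3"
  have "{h. cyc t x h} \<subseteq> {if x+1<t then x+1 else 0, if x=0 then t-1 else x-1}"
    using t by (auto simp: cyc_iff)
  moreover have "card {if x+1<t then x+1 else 0, if x=0 then t-1 else x-1} \<le> 2"
    by (simp add: card_insert_le_m1)
  ultimately show ?thesis by (meson card_mono finite.emptyI finite.insertI le_trans)
qed

lemma nb_fin: "finite {h. cyc t x h}"
  by (rule finite_subset[of _ "{..<t}"]) (auto simp: cyc_def)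

lemma fib_nb: "clq s t K \<Longrightarrow> cyc s g g' \<Longrightarrow> h' \<in> fib K g' \<Longrightarrow> fib K g \<subseteq> {h. cyc t h' h}"
proof
  fix h assume c: "clq s t K" and gg: "cyc s g g'" and h': "h' \<in> fib K g'" and h: "h \<in> fib K g"
  have "g \<noteq> g'" using gg by (auto simp: cyc_def)
  then have "cyc t h h'" using clq_pair[OF c, of g h g' h'] h h' gg by (auto simp: fib_def)
  then show "h \<in> {h. cyc t h' h}" by (simp add: cyc_sym)
qed

lemma two_elems: "finite A \<Longrightarrow> 2 \<le> card A \<Longrightarrow> \<exists>a b. a \<in> A \<and> b \<in> A \<and> a \<noteq> b"
  using card_le_Suc0_iff_eq by fastforce

lemma pair_bound:
  assumes t: "t \<ge> 5" and c: "clq s t K" and gg: "cyc s g g'"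
  shows "card (fib K g) + card (fib K g') \<le> max (t div 2) 3"
proof (cases "fib K g = {} \<or> fib K g' = {}")
  case True
  then show ?thesis using fib_card[OF _ c, of g] fib_card[OF _ c, of g'] t by auto
next
  case False
  then obtain h y where h: "h \<in> fib K g" and y: "y \<in> fib K g'" by blast
  have gg': "cyc s g' g" using gg cyc_sym by metis
  have s1: "fib K g \<subseteq> {x. cyc t y x}" using fib_nb[OF c gg y] .
  have s2: "fib K g' \<subseteq> {x. cyc t h x}" using fib_nb[OF c gg' h] .
  have c1: "card (fib K g) \<le> 2" using card_mono[OF nb_fin s1] nb_card[of t y] t by linarith
  have c2: "card (fib K g') \<le> 2" using card_mono[OF nb_fin s2] nb_card[of t h] t by linarith
  have "\<not> (2 \<le> card (fib K g) \<and> 2 \<le> card (fib K g'))"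
  proof
    assume "2 \<le> card (fib K g) \<and> 2 \<le> card (fib K g')"
    then have "2 \<le> card (fib K g)" "2 \<le> card (fib K g')" by auto
    then obtain h1 h2 y1 y2 where hh: "h1 \<in> fib K g" "h2 \<in> fib K g" "h1 \<noteq> h2"
      and yy: "y1 \<in> fib K g'" "y2 \<in> fib K g'" "y1 \<noteq> y2"
      using two_elems[OF fin_fib[OF c]] by meson
    have "cyc t y1 h1" "cyc t y1 h2" "cyc t y2 h1" "cyc t y2 h2"
      using subsetD[OF fib_nb[OF c gg yy(1)]] subsetD[OF fib_nb[OF c gg yy(2)]] hh by auto
    then have "cyc t h1 y1" "cyc t h2 y1" "cyc t h1 y2" "cyc t h2 y2" by (simp_all add: cyc_sym)
    then show False using four_cycle[OF t] hh yy by blast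
  qed
  then show ?thesis using c1 c2 by linarith
qed


lemma win_abs:
  assumes t: "t \<ge> 5" and c: "clq s t K"
    and a01: "cyc s c0 c1" and a12: "cyc s c1 c2" and a23: "cyc s c2 c3"
    and n03: "\<not> cyc s c0 c3" and d03: "c0 \<noteq> c3"
    and ne: "fib K c0 \<noteq> {}" "fib K c1 \<noteq> {}" "fib K c2 \<noteq> {}" "fib K c3 \<noteq> {}"
  shows "card (fib K c0) \<le> 1 \<and> card (fib K c1) \<le> 1"
proof
  have a10: "cyc s c1 c0" and a21: "cyc s c2 c1" and a32: "cyc s c3 c2" using a01 a12 a23 cyc_sym by metis+
  show "card (fib K c0) \<le> 1"
  proof (rule ccontr)
    assume "\<not> ?thesis"
    then have "2 \<le> card (fib K c0)" by simp
    then obtain h1 h2 where hh: "h1 \<in> fib K c0" "h2 \<in> fib K c0" "h1 \<noteq> h2"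
      using two_elems[OF fin_fib[OF c]] by meson
    obtain y1 y2 y3 where y: "y1 \<in> fib K c1" "y2 \<in> fib K c2" "y3 \<in> fib K c3" using ne by blast
    have 1: "cyc t y1 h1" "cyc t y1 h2" using subsetD[OF fib_nb[OF c a01 y(1)]] hh by auto
    have 2: "cyc t y1 y2" using subsetD[OF fib_nb[OF c a21 y(1)]] y by auto
    have 3: "cyc t y2 y3" using subsetD[OF fib_nb[OF c a32 y(2)]] y by auto
    have 4: "\<not> cyc t h1 y3" "\<not> cyc t h2 y3"
      using clq_pair[OF c, of c0 h1 c3 y3] clq_pair[OF c, of c0 h2 c3 y3] hh y d03 n03 by (auto simp: fib_def)
    have "y2 = h1 \<or> y2 = h2" using three_nb[OF t 1 2 hh(3)] .
    then show False using 3 4 by auto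
  qed
  show "card (fib K c1) \<le> 1"
  proof (rule ccontr)
    assume "\<not> ?thesis"
    then have "2 \<le> card (fib K c1)" by simp
    then obtain h1 h2 where hh: "h1 \<in> fib K c1" "h2 \<in> fib K c1" "h1 \<noteq> h2"
      using two_elems[OF fin_fib[OF c]] by meson
    obtain x y1 y2 where y: "x \<in> fib K c0" "y1 \<in> fib K c2" "y2 \<in> fib K c3" using ne by blast
    have 1: "cyc t x h1" "cyc t x h2" using subsetD[OF fib_nb[OF c a10 y(1)]] hh by auto
    have 2: "cyc t y1 h1" "cyc t y1 h2" using subsetD[OF fib_nb[OF c a12 y(2)]] hh by auto
    have 3: "cyc t y1 y2" using subsetD[OF fib_nb[OF c a32 y(2)]] y by auto
    have 4: "\<not> cyc t x y2"
      using clq_pair[OF c, of c0 x c3 y2] y d03 n03 by (auto simp: fib_def)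
    have "x = y1"
    proof (rule ccontr)
      assume "x \<noteq> y1"
      moreover have "cyc t h1 x" "cyc t h2 x" "cyc t h1 y1" "cyc t h2 y1" using 1 2 by (simp_all add: cyc_sym)
      ultimately show False using four_cycle[OF t] hh(3) by blast
    qed
    then show False using 3 4 by simp
  qed
qed

lemma window:
  assumes s: "s \<ge> 5" and t: "t \<ge> 5" and c: "clq s t K" and g: "g < s"
    and ne: "\<And>i. i < 4 \<Longrightarrow> fib K ((g+i) mod s) \<noteq> {}"
  shows "\<And>i. i < 4 \<Longrightarrow> card (fib K ((g+i) mod s)) \<le> 1"
proof -
  fix i :: nat assume i: "i < 4"
  let ?c = "\<lambda>i. (g + i) mod s"
  note w = win_cols[OF s g]
  have ne': "fib K (?c 0) \<noteq> {}" "fib K (?c 1) \<noteq> {}" "fib K (?c 2) \<noteq> {}" "fib K (?c 3) \<noteq> {}"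
    using ne[of 0] ne[of 1] ne[of 2] ne[of 3] by simp_all
  have A: "card (fib K (?c 0)) \<le> 1 \<and> card (fib K (?c 1)) \<le> 1"
    using win_abs[OF t c w(1) w(2) w(3) w(5) w(8) ne'] .
  have w5: "\<not> cyc s (?c 3) (?c 0)" using w(5) cyc_sym by metis
  have B: "card (fib K (?c 3)) \<le> 1 \<and> card (fib K (?c 2)) \<le> 1"
    using win_abs[OF t c w(3)[unfolded cyc_sym[of s "?c 2"]] w(2)[unfolded cyc_sym[of s "?c 1"]]
      w(1)[unfolded cyc_sym[of s "?c 0"]] w5 w(8)[symmetric] ne'(4) ne'(3) ne'(2) ne'(1)] .
  have "i = 0 \<or> i = 1 \<or> i = 2 \<or> i = 3" using i by auto
  then show "card (fib K ((g+i) mod s)) \<le> 1" using A B by auto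
qed

lemma rot_inj: "inj_on (\<lambda>g. (g + c) mod s) {..<(s::nat)}"
proof
  fix a b assume a: "a \<in> {..<s}" and b: "b \<in> {..<s}" and e: "(a + c) mod s = (b + c) mod s"
  have s0: "s > 0" using a by auto
  have cm: "c mod s < s" using s0 by simp
  have "(a + c) mod s = (a + c mod s) mod s" "(b + c) mod s = (b + c mod s) mod s"
    by (simp_all add: mod_add_right_eq)
  then show "a = b" using e a b cm mod_add_small[of a s "c mod s"] mod_add_small[of b s "c mod s"]
    by (auto split: if_splits)
qed

lemma sum_rot: "(\<Sum>g<s. f ((g + c) mod s)) = (\<Sum>g<(s::nat). f g)"
proof (cases "s = 0")
  case True then show ?thesis by simp
next
  case False
  have im: "(\<lambda>g. (g + c) mod s) ` {..<s} = {..<s}"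
    by (rule endo_inj_surj) (use False rot_inj in auto)
  have "(\<Sum>g<s. f g) = sum f ((\<lambda>g. (g + c) mod s) ` {..<s})" using im by simp
  also have "\<dots> = (\<Sum>g<s. f ((g + c) mod s))" by (simp add: sum.reindex[OF rot_inj] comp_def)
  finally show ?thesis by simp
qed

lemma sum_pairs: "(\<Sum>g<2*(k::nat). F g) = (\<Sum>i<k. F (2*i) + F (2*i+1))"
  by (induction k) (simp_all add: algebra_simps)


lemma rot_facts:
  fixes f :: "nat \<Rightarrow> nat"
  assumes s: "s \<ge> 2" and e: "e < s" "f e = 0"
  shows "(\<Sum>g<s. f g) = (\<Sum>g<s-1. f ((g + (e+1)) mod s))"
    and "\<And>i. f ((Suc i + (e+1)) mod s) = f (((i + (e+1)) mod s + 1) mod s)"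
proof -
  have "(\<Sum>g<s. f g) = (\<Sum>g<s. f ((g + (e+1)) mod s))" by (rule sum_rot[symmetric])
  also have "\<dots> = (\<Sum>g<Suc (s-1). f ((g + (e+1)) mod s))" using s by simp
  also have "\<dots> = (\<Sum>g<s-1. f ((g + (e+1)) mod s)) + f ((s - 1 + (e+1)) mod s)" by simp
  also have "(s - 1 + (e+1)) mod s = e" using s e by simp
  finally show "(\<Sum>g<s. f g) = (\<Sum>g<s-1. f ((g + (e+1)) mod s))" using e by simp
next
  fix i
  show "f ((Suc i + (e+1)) mod s) = f (((i + (e+1)) mod s + 1) mod s)"
    by (simp add: mod_Suc_eq)
qed

lemma fib_ne: "card (fib K g) \<noteq> 0 \<Longrightarrow> fib K g \<noteq> {}" by auto

lemma bound_t6: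
  assumes s: "s \<ge> 5" and t: "t \<ge> 6" and c: "clq s t K"
  shows "card K \<le> (s div 2) * (t div 2)"
proof -
  define f where "f = (\<lambda>g. card (fib K g))"
  define m where "m = t div 2"
  have m3: "m \<ge> 3" using t by (simp add: m_def)
  have pb: "f a + f ((a+1) mod s) \<le> m" if "a < s" for a
    using pair_bound[OF _ c cyc_suc[OF _ that]] s t m3 by (simp add: f_def m_def max_def)
  have ck: "card K = (\<Sum>g<s. f g)" using card_K[OF c] by (simp add: f_def)
  consider (ev) "even s" | (odde) "odd s" "\<exists>e<s. f e = 0" | (oddn) "odd s" "\<forall>g<s. f g \<noteq> 0"
    by (cases "even s"; cases "\<exists>e<s. f e = 0") auto
  then show ?thesis
  proof cases
    case ev
    then obtain k where k: "s = 2*k" by blast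
    have "(\<Sum>g<s. f g) = (\<Sum>i<k. f (2*i) + f (2*i+1))" using k sum_pairs by simp
    also have "\<dots> \<le> (\<Sum>i<k. m)"
    proof (rule sum_mono)
      fix i assume "i \<in> {..<k}"
      then have "2*i < s" "2*i+1 < s" using k by auto
      then show "f (2*i) + f (2*i+1) \<le> m" using pb[of "2*i"] by simp
    qed
    finally show ?thesis using ck k by (simp add: m_def)
  next
    case odde
    then obtain e where e: "e < s" "f e = 0" by blast
    obtain k where k: "s = 2*k+1" using odde(1) oddE by blast
    note r = rot_facts[of s e f, OF _ e]
    have "(\<Sum>g<s. f g) = (\<Sum>g<2*k. f ((g + (e+1)) mod s))" using r(1) s k by simp
    also have "\<dots> = (\<Sum>i<k. f ((2*i + (e+1)) mod s) + f ((2*i+1 + (e+1)) mod s))" by (rule sum_pairs)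
    also have "\<dots> \<le> (\<Sum>i<k. m)"
    proof (rule sum_mono)
      fix i assume "i \<in> {..<k}"
      have "f ((2*i+1 + (e+1)) mod s) = f (((2*i + (e+1)) mod s + 1) mod s)" using r(2)[of "2*i"] s by simp
      moreover have "(2*i + (e+1)) mod s < s" using s by simp
      ultimately show "f ((2*i + (e+1)) mod s) + f ((2*i+1 + (e+1)) mod s) \<le> m" using pb by simp
    qed
    finally show ?thesis using ck k by (simp add: m_def)
  next
    case oddn
    obtain k where k: "s = 2*k+1" using oddn(1) oddE by blast
    have le1: "f g \<le> 1" if g: "g < s" for g
    proof -
      have "\<And>i. i < 4 \<Longrightarrow> fib K ((g+i) mod s) \<noteq> {}"
        using oddn(2) s by (intro fib_ne) (simp add: f_def)
      from window[OF s _ c g this, of 0] t g show ?thesis by (simp add: f_def)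
    qed
    have "(\<Sum>g<s. f g) \<le> (\<Sum>g<s. 1)" by (rule sum_mono) (use le1 in auto)
    also have "\<dots> = s" by simp
    also have "s \<le> k * m"
    proof -
      have "k * 3 \<le> k * m" using m3 by (rule mult_le_mono2)
      then show ?thesis using k s by linarith
    qed
    finally show ?thesis using ck k by (simp add: m_def)
  qed
qed


lemma bound55:
  assumes c: "clq 5 5 K"
  shows "card K \<le> 5"
proof -
  define f where "f = (\<lambda>g. card (fib K g))"
  have f2: "f g \<le> 2" for g using fib_card[OF _ c, of g] by (simp add: f_def)
  have pb: "f a + f ((a+1) mod 5) \<le> 3" if "a < 5" for a
    using pair_bound[OF _ c cyc_suc[OF _ that]] by (simp add: f_def)
  have ck: "card K = (\<Sum>g<5. f g)" using card_K[OF c] by (simp add: f_def)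
  show ?thesis
  proof (cases "\<forall>g<5. f g \<noteq> 0")
    case True
    have le1: "f g \<le> 1" if g: "g < 5" for g
    proof -
      have "\<And>i. i < 4 \<Longrightarrow> fib K ((g+i) mod 5) \<noteq> {}"
        using True by (intro fib_ne) (simp add: f_def)
      from window[of 5 5 K g, OF _ _ c g this, of 0] g show ?thesis by (simp add: f_def)
    qed
    have "(\<Sum>g<5. f g) \<le> (\<Sum>g<(5::nat). 1)" by (rule sum_mono) (use le1 in auto)
    then show ?thesis using ck by simp
  next
    case False
    then obtain e where e: "e < 5" "f e = 0" by blast
    define F where "F = (\<lambda>i. f ((i + (e+1)) mod 5))"
    note r = rot_facts[of 5 e f, OF _ e]
    have "card K = (\<Sum>g<4. F g)" using ck r(1) by (simp add: F_def)
    also have "\<dots> = F 0 + F 1 + F 2 + F 3" by (simp add: eval_nat_numeral)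
    finally have sumF: "card K = F 0 + F 1 + F 2 + F 3" .
    have pbF: "F i + F (Suc i) \<le> 3" for i
      using pb[of "(i + (e+1)) mod 5"] r(2)[of i] by (simp add: F_def)
    have F2: "F i \<le> 2" for i using f2 by (simp add: F_def)
    show ?thesis
    proof (cases "F 0 \<noteq> 0 \<and> F 1 \<noteq> 0 \<and> F 2 \<noteq> 0 \<and> F 3 \<noteq> 0")
      case True
      define g where "g = (e+1) mod 5"
      have g5: "g < 5" by (simp add: g_def)
      have gi: "(g + i) mod 5 = (i + (e+1)) mod 5" for i
        unfolding g_def mod_add_left_eq by (simp add: ac_simps)
      have ne: "\<And>i. i < 4 \<Longrightarrow> fib K ((g+i) mod 5) \<noteq> {}"
      proof -
        fix i :: nat assume "i < 4"
        then have "i = 0 \<or> i = 1 \<or> i = 2 \<or> i = 3" by auto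
        then have "F i \<noteq> 0" using True by auto
        then show "fib K ((g+i) mod 5) \<noteq> {}" by (intro fib_ne) (simp add: gi F_def f_def)
      qed
      have "F i \<le> 1" if "i < 4" for i
        using window[of 5 5 K g, OF _ _ c g5 ne that] by (simp add: gi F_def f_def)
      then have "F 0 \<le> 1" "F 1 \<le> 1" "F 2 \<le> 1" "F 3 \<le> 1" by auto
      then show ?thesis using sumF by linarith
    next
      case False
      have "F 0 + F 1 \<le> 3" "F 1 + F 2 \<le> 3" "F 2 + F 3 \<le> 3"
        using pbF[of 0] pbF[of 1] pbF[of 2] by (simp_all add: numeral_eq_Suc)
      then show ?thesis using sumF False F2[of 0] F2[of 1] F2[of 2] F2[of 3] by linarith
    qed
  qed
qed

lemma clq_swap: "clq s t K \<Longrightarrow> clq t s (prod.swap ` K)"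
  unfolding clq_def by auto

lemma bound_gen:
  assumes s: "s \<ge> 5" and t: "t \<ge> 5" and m: "6 \<le> max s t" and c: "clq s t K"
  shows "card K \<le> (s div 2) * (t div 2)"
proof (cases "t \<ge> 6")
  case True then show ?thesis using bound_t6[OF s True c] by simp
next
  case False
  then have s6: "s \<ge> 6" using m by auto
  have "card (prod.swap ` K) \<le> (t div 2) * (s div 2)" using bound_t6[OF t s6 clq_swap[OF c]] .
  moreover have "card (prod.swap ` K) = card K" by (simp add: card_image)
  ultimately show ?thesis by (simp add: mult.commute)
qed


lemma lt5: "{..<5::nat} = {0,1,2,3,4}" by auto

lemma W5_clq: "clq 5 5 {(0,0),(1,1),(2,2),(3,3),(4,4)}"
  unfolding clq_def by (simp add: cyc_def)

lemma W5_tw: "\<forall>x\<in>{(0,0),(1,1),(2,2),(3,3),(4,4)}. \<forall>y\<in>{(0,0),(1,1),(2,2),(3,3),(4,4)}. x \<noteq> y \<longrightarrow> (\<exists>z\<in>{..<5}\<times>{..<5}.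
       (adj (XX 5 5) x z \<and> \<not> adj (XX 5 5) y z \<and> z \<noteq> y) \<or> (adj (XX 5 5) y z \<and> \<not> adj (XX 5 5) x z \<and> z \<noteq> x))"
  unfolding lt5 by (simp add: adj_X cyc_def)


lemma even_nc: "s \<ge> 3 \<Longrightarrow> i < s div 2 \<Longrightarrow> i' < s div 2 \<Longrightarrow> \<not> cyc s (2*i) (2*i')"
  by (simp add: cyc_iff) presburger

lemma twin_gen:
  assumes s: "s \<ge> 5" and t: "t \<ge> 5" and x: "(g,h) \<in> {..<s}\<times>{..<t}" and y: "(g',h') \<in> {..<s}\<times>{..<t}"
    and ne: "(g,h) \<noteq> (g',h')" and ng: "\<not> cyc s g g'" and nh: "\<not> cyc t h h'"
  shows "\<exists>z\<in>{..<s}\<times>{..<t}. adj (XX s t) (g,h) z \<and> \<not> adj (XX s t) (g',h') z \<and> z \<noteq> (g',h')"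
proof (cases "h = h'")
  case False
  obtain b where b: "b < t" "cyc t h' b" "\<not> cyc t h b" "b \<noteq> h" using other_nb[OF t False] x y by auto
  have "b \<noteq> h'" using b(2) cyc_irrefl by metis
  then show ?thesis
    by (intro bexI[of _ "(g',b)"]) (use x y b ng in \<open>auto simp: adj_X cyc_irrefl\<close>)
next
  case True
  then have gne: "g \<noteq> g'" using ne by simp
  obtain a where a: "a < s" "cyc s g' a" "\<not> cyc s g a" "a \<noteq> g" using other_nb[OF s gne] x y by auto
  have "a \<noteq> g'" using a(2) cyc_irrefl by metis
  then show ?thesis
    by (intro bexI[of _ "(a,h')"]) (use x y a True in \<open>auto simp: adj_X cyc_irrefl\<close>)
qed

definition Wg :: "nat \<Rightarrow> nat \<Rightarrow> (nat\<times>nat) set" where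
  "Wg s t = (\<lambda>(i,j). (2*i, 2*j)) ` ({..<s div 2} \<times> {..<t div 2})"

lemma Wg_card: "card (Wg s t) = (s div 2) * (t div 2)"
proof -
  have "inj_on (\<lambda>(i::nat,j::nat). (2*i, 2*j)) ({..<s div 2} \<times> {..<t div 2})"
    by (auto simp: inj_on_def)
  then show ?thesis unfolding Wg_def by (simp add: card_image card_cartesian_product)
qed

lemma Wg_mem: "p \<in> Wg s t \<Longrightarrow> \<exists>i j. p = (2*i, 2*j) \<and> i < s div 2 \<and> j < t div 2"
  unfolding Wg_def by auto

lemma Wg_clq:
  assumes s: "s \<ge> 5" and t: "t \<ge> 5"
  shows "clq s t (Wg s t)"
  unfolding clq_def
proof (intro conjI ballI impI)
  show "Wg s t \<subseteq> {..<s}\<times>{..<t}" unfolding Wg_def by auto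
next
  fix p q assume p: "p \<in> Wg s t" and q: "q \<in> Wg s t" and "p \<noteq> q"
  obtain i j where ij: "p = (2*i, 2*j)" "i < s div 2" "j < t div 2" using Wg_mem[OF p] by blast
  obtain i' j' where ij': "q = (2*i', 2*j')" "i' < s div 2" "j' < t div 2" using Wg_mem[OF q] by blast
  show "cyc s (fst p) (fst q) = cyc t (snd p) (snd q)"
    using even_nc[of s i i'] even_nc[of t j j'] ij ij' s t by simp
qed

lemma Wg_tw:
  assumes s: "s \<ge> 5" and t: "t \<ge> 5"
  shows "\<forall>x\<in>Wg s t. \<forall>y\<in>Wg s t. x \<noteq> y \<longrightarrow> (\<exists>z\<in>{..<s}\<times>{..<t}.
       (adj (XX s t) x z \<and> \<not> adj (XX s t) y z \<and> z \<noteq> y) \<or> (adj (XX s t) y z \<and> \<not> adj (XX s t) x z \<and> z \<noteq> x))"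
proof (intro ballI impI)
  fix p q assume p: "p \<in> Wg s t" and q: "q \<in> Wg s t" and ne: "p \<noteq> q"
  obtain i j where ij: "p = (2*i, 2*j)" "i < s div 2" "j < t div 2" using Wg_mem[OF p] by blast
  obtain i' j' where ij': "q = (2*i', 2*j')" "i' < s div 2" "j' < t div 2" using Wg_mem[OF q] by blast
  have V: "p \<in> {..<s}\<times>{..<t}" "q \<in> {..<s}\<times>{..<t}" using ij ij' by auto
  have "\<exists>z\<in>{..<s}\<times>{..<t}. adj (XX s t) p z \<and> \<not> adj (XX s t) q z \<and> z \<noteq> q"
    using twin_gen[OF s t, of "2*i" "2*j" "2*i'" "2*j'"] V ne ij ij' even_nc[of s i i'] even_nc[of t j j'] s t
    by simp
  then show "\<exists>z\<in>{..<s}\<times>{..<t}.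
       (adj (XX s t) p z \<and> \<not> adj (XX s t) q z \<and> z \<noteq> q) \<or> (adj (XX s t) q z \<and> \<not> adj (XX s t) p z \<and> z \<noteq> p)"
    by blast
qed

theorem mainTheorem9:
  shows "(\<forall>s t :: nat. 5 \<le> s \<longrightarrow> 5 \<le> t \<longrightarrow> 6 \<le> max s t \<longrightarrow>
      int (strong_metric_dim (modular_product (complement (cycle_graph s)) (complement (cycle_graph t))))
        = int s * int t - int (s div 2) * int (t div 2))
    \<and> strong_metric_dim (modular_product (complement (cycle_graph 5)) (complement (cycle_graph 5))) = 20"
proof (intro conjI allI impI)
  fix s t :: nat assume s: "5 \<le> s" and t: "5 \<le> t" and m: "6 \<le> max s t"
  have "strong_metric_dim (XX s t) = s * t - card (Wg s t)"
    by (rule dim_X[OF s t Wg_clq[OF s t] Wg_tw[OF s t]]) (use bound_gen[OF s t m] Wg_card in simp)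
  moreover have "(s div 2) * (t div 2) \<le> s * t" by (intro mult_le_mono) auto
  ultimately show "int (strong_metric_dim (XX s t)) = int s * int t - int (s div 2) * int (t div 2)"
    by (simp add: Wg_card of_nat_diff)
next
  have c5: "card {(0::nat,0::nat),(1,1),(2,2),(3,3),(4,4)} = 5" by simp
  have bnd: "\<And>K. clq 5 5 K \<Longrightarrow> card K \<le> card {(0::nat,0::nat),(1,1),(2,2),(3,3),(4,4)}"
    unfolding c5 by (rule bound55)
  have "strong_metric_dim (XX 5 5) = 5 * 5 - card {(0::nat,0::nat),(1,1),(2,2),(3,3),(4,4)}"
    by (rule dim_X[OF _ _ W5_clq W5_tw bnd]) simp_all
  then show "strong_metric_dim (XX 5 5) = 20" unfolding c5 by simp
qed

end
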